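(* Let $\Gamma=(V,E)$ be a finite simplicial graph such that $A_\Gamma$ has non-trivial centre. Let $S\subseteq V$ be the set of social vertices of $\Gamma$, $k=|S|$ (so $k\ge 1$), and $\Delta=\Gamma\setminus S$, so that $\Gamma$ is the join of $S$ and $\Delta$. Then the subgroup $\mathcal{L}$ of $\mathrm{Aut}(A_\Gamma)$ generated by all lateral transvections $\tau_{sa}$ ($s\in S$, $a\in\Delta$) is isomorphic to $\mathbb{Z}^{k|\Delta|}$.
   Context: For a finite simplicial graph $\Gamma=(V,E)$, $A_\Gamma=\langle v\in V\mid [v,w]=1 \text{ for }(v,w)\in E\rangle$. A vertex $s$ is social if it is adjacent to every other vertex of $\Gamma$. The join of two graphs is their disjoint union together with all edges between a vertex of the first and a vertex of the second. For $s\in S$ and $a\in\Delta$ (vertices of $\Delta$), the lateral transvection $\tau_{sa}\in\mathrm{Aut}(A_\Gamma)$ is the automorphism sending $a\mapsto as$ and fixing all other generators $v\in V$. Here $|\Delta|$ denotes the number of vertices of $\Delta$. *)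

theory Defs
  imports "HOL-Algebra.Algebra"
begin

definition simplicial_graph :: "'a set \<Rightarrow> ('a \<times> 'a) set \<Rightarrow> bool" where
  "simplicial_graph V E \<longleftrightarrow> finite V \<and> E \<subseteq> V \<times> V \<and> sym E \<and> irrefl E"

text \<open>Letters of words: (v, True) is v, (v, False) is v inverse.\<close>
type_synonym 'a letter = "'a \<times> bool"

definition inv_letter :: "'a letter \<Rightarrow> 'a letter" where
  "inv_letter x = (fst x, \<not> snd x)"

inductive raag_step :: "('a \<times> 'a) set \<Rightarrow> 'a letter list \<Rightarrow> 'a letter list \<Rightarrow> bool"
  for E where
  cancel: "raag_step E (u @ [x, inv_letter x] @ w) (u @ w)"
| commute: "(fst x, fst y) \<in> E \<Longrightarrow> raag_step E (u @ [x, y] @ w) (u @ [y, x] @ w)"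

definition raag_rel :: "'a set \<Rightarrow> ('a \<times> 'a) set \<Rightarrow> ('a letter list \<times> 'a letter list) set" where
  "raag_rel V E = (({(u, w). raag_step E u w} \<inter> (lists (V \<times> UNIV) \<times> lists (V \<times> UNIV)))
                    \<union> ({(u, w). raag_step E u w} \<inter> (lists (V \<times> UNIV) \<times> lists (V \<times> UNIV)))\<inverse>)\<^sup>*
                   \<inter> (lists (V \<times> UNIV) \<times> lists (V \<times> UNIV))"

definition raag_mult :: "'a set \<Rightarrow> ('a \<times> 'a) set \<Rightarrow> 'a letter list set \<Rightarrow> 'a letter list set \<Rightarrow> 'a letter list set" where
  "raag_mult V E P Q = raag_rel V E `` {(SOME u. u \<in> P) @ (SOME w. w \<in> Q)}"

definition RAAG :: "'a set \<Rightarrow> ('a \<times> 'a) set \<Rightarrow> ('a letter list set) monoid" where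
  "RAAG V E = \<lparr> carrier = lists (V \<times> UNIV) // raag_rel V E,
                monoid.mult = raag_mult V E,
                monoid.one = raag_rel V E `` {[]} \<rparr>"

definition centre :: "('g, 'b) monoid_scheme \<Rightarrow> 'g set" where
  "centre G = {z \<in> carrier G. \<forall>g \<in> carrier G. z \<otimes>\<^bsub>G\<^esub> g = g \<otimes>\<^bsub>G\<^esub> z}"

definition social :: "'a set \<Rightarrow> ('a \<times> 'a) set \<Rightarrow> 'a \<Rightarrow> bool" where
  "social V E s \<longleftrightarrow> s \<in> V \<and> (\<forall>v \<in> V. v \<noteq> s \<longrightarrow> (s, v) \<in> E)"

definition transv_letter :: "'a \<Rightarrow> 'a \<Rightarrow> 'a letter \<Rightarrow> 'a letter list" where
  "transv_letter s a x =
     (if fst x = a then (if snd x then [(a, True), (s, True)] else [(s, False), (a, False)])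
      else [x])"

definition lateral_transvection ::
  "'a set \<Rightarrow> ('a \<times> 'a) set \<Rightarrow> 'a \<Rightarrow> 'a \<Rightarrow> 'a letter list set \<Rightarrow> 'a letter list set" where
  "lateral_transvection V E s a =
     (\<lambda>cl \<in> carrier (RAAG V E). raag_rel V E `` {concat (map (transv_letter s a) (SOME u. u \<in> cl))})"

end

theory Submission
  imports Defs
begin

abbreviation "LL V \<equiv> lists (V \<times> (UNIV::bool set))"

definition "stepR V E = {(u, w). raag_step E u w} \<inter> (LL V \<times> LL V)"

lemma raag_rel_alt: "raag_rel V E = (stepR V E \<union> (stepR V E)\<inverse>)\<^sup>* \<inter> (LL V \<times> LL V)"
  unfolding raag_rel_def stepR_def by simp

lemma equiv_raag: "equiv (LL V) (raag_rel V E)"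
proof -
  let ?M = "stepR V E \<union> (stepR V E)\<inverse>"
  have s: "sym (?M\<^sup>*)" by (simp add: sym_Un_converse sym_rtrancl)
  show ?thesis unfolding raag_rel_alt equiv_def
  proof (intro conjI)
    show "?M\<^sup>* \<inter> (LL V \<times> LL V) \<subseteq> LL V \<times> LL V" by blast
    show "refl_on (LL V) (?M\<^sup>* \<inter> (LL V \<times> LL V))" by (auto simp: refl_on_def simp del: in_lists_conv_set)
    show "sym (?M\<^sup>* \<inter> (LL V \<times> LL V))" using s by (auto simp: sym_def)
    show "trans (?M\<^sup>* \<inter> (LL V \<times> LL V))" by (auto simp: trans_def intro: rtrancl_trans)
  qed
qed

lemma step_app: "raag_step E u w \<Longrightarrow> raag_step E (p @ u @ q) (p @ w @ q)"
proof (induction rule: raag_step.induct)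
  case (cancel u x w)
  then show ?case using raag_step.cancel[of E "p @ u" x "w @ q"] by simp
next
  case (commute x y u w)
  then show ?case using raag_step.commute[of x y E "p @ u" "w @ q"] by simp
qed

lemma M_app:
  assumes "(u, w) \<in> (stepR V E \<union> (stepR V E)\<inverse>)\<^sup>*" "p \<in> LL V" "q \<in> LL V"
  shows "(p @ u @ q, p @ w @ q) \<in> (stepR V E \<union> (stepR V E)\<inverse>)\<^sup>*"
  using assms(1)
proof (induction rule: rtrancl_induct)
  case base then show ?case by simp
next
  case (step y z)
  have "(p @ y @ q, p @ z @ q) \<in> stepR V E \<union> (stepR V E)\<inverse>"
    using step(2) assms(2,3) by (auto simp: stepR_def intro: step_app)
  then show ?case using step(3) by (rule rtrancl_into_rtrancl[rotated])
qed

lemma rel_app: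
  assumes "(u, w) \<in> raag_rel V E" "p \<in> LL V" "q \<in> LL V"
  shows "(p @ u @ q, p @ w @ q) \<in> raag_rel V E"
  using assms M_app[of u w V E p q] unfolding raag_rel_alt by auto

lemma rel_app2:
  assumes "(u, u') \<in> raag_rel V E" "(w, w') \<in> raag_rel V E"
  shows "(u @ w, u' @ w') \<in> raag_rel V E"
proof -
  have L: "u \<in> LL V" "u' \<in> LL V" "w \<in> LL V" "w' \<in> LL V"
    using assms unfolding raag_rel_def by auto
  have "(u @ w, u' @ w) \<in> raag_rel V E" using rel_app[OF assms(1), of "[]" w] L by simp
  moreover have "(u' @ w, u' @ w') \<in> raag_rel V E" using rel_app[OF assms(2), of u' "[]"] L by simp
  ultimately show ?thesis using equiv_raag[of V E] unfolding equiv_def trans_def by blast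
qed

lemma rel_step: "raag_step E u w \<Longrightarrow> u \<in> LL V \<Longrightarrow> w \<in> LL V \<Longrightarrow> (u, w) \<in> raag_rel V E"
  unfolding raag_rel_alt stepR_def by auto

lemma rel_L: "(u, w) \<in> raag_rel V E \<Longrightarrow> u \<in> LL V \<and> w \<in> LL V"
  unfolding raag_rel_def by auto

abbreviation "cls V E u \<equiv> raag_rel V E `` {u}"

lemma cls_eq: "u \<in> LL V \<Longrightarrow> w \<in> LL V \<Longrightarrow> cls V E u = cls V E w \<longleftrightarrow> (u, w) \<in> raag_rel V E"
  using eq_equiv_class_iff[OF equiv_raag] by blast

lemma cls_eqI: "(u, w) \<in> raag_rel V E \<Longrightarrow> cls V E u = cls V E w"
  using cls_eq rel_L by blast

lemma rep_in: "u \<in> LL V \<Longrightarrow> (u, SOME w. w \<in> cls V E u) \<in> raag_rel V E"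
proof -
  assume u: "u \<in> LL V"
  have "u \<in> cls V E u" using equiv_class_self[OF equiv_raag u] .
  then have "(SOME w. w \<in> cls V E u) \<in> cls V E u" by (rule someI)
  then show ?thesis by simp
qed

lemma rep_cls: "u \<in> LL V \<Longrightarrow> cls V E (SOME w. w \<in> cls V E u) = cls V E u"
  using cls_eqI[OF rep_in] by metis

lemma carrier_RAAG: "carrier (RAAG V E) = cls V E ` LL V"
  by (auto simp: RAAG_def quotient_def)

lemma cls_in [simp]: "u \<in> LL V \<Longrightarrow> cls V E u \<in> carrier (RAAG V E)"
  by (auto simp: carrier_RAAG)

lemma carrierE: "P \<in> carrier (RAAG V E) \<Longrightarrow> (\<And>u. u \<in> LL V \<Longrightarrow> P = cls V E u \<Longrightarrow> thesis) \<Longrightarrow> thesis"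
  by (auto simp: carrier_RAAG)

lemma mult_cls: "u \<in> LL V \<Longrightarrow> w \<in> LL V \<Longrightarrow> cls V E u \<otimes>\<^bsub>RAAG V E\<^esub> cls V E w = cls V E (u @ w)"
proof -
  assume u: "u \<in> LL V" and w: "w \<in> LL V"
  have "(u @ w, (SOME x. x \<in> cls V E u) @ (SOME x. x \<in> cls V E w)) \<in> raag_rel V E"
    by (rule rel_app2[OF rep_in[OF u] rep_in[OF w]])
  then have "cls V E ((SOME x. x \<in> cls V E u) @ (SOME x. x \<in> cls V E w)) = cls V E (u @ w)"
    by (rule cls_eqI[symmetric])
  moreover have "cls V E u \<otimes>\<^bsub>RAAG V E\<^esub> cls V E w = raag_mult V E (cls V E u) (cls V E w)"
    by (simp add: RAAG_def)
  ultimately show ?thesis by (simp only: raag_mult_def)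
qed

lemma one_RAAG: "\<one>\<^bsub>RAAG V E\<^esub> = cls V E []"
  by (simp add: RAAG_def)

definition inv_word :: "'a letter list \<Rightarrow> 'a letter list" where
  "inv_word u = rev (map inv_letter u)"

lemma inv_letter_inv [simp]: "inv_letter (inv_letter x) = x"
  by (simp add: inv_letter_def)

lemma inv_word_inv [simp]: "inv_word (inv_word u) = u"
  by (simp add: inv_word_def rev_map comp_def)

lemma inv_word_L: "u \<in> LL V \<Longrightarrow> inv_word u \<in> LL V"
  by (induction u) (auto simp: inv_word_def inv_letter_def)

lemma right_inv_rel: "u \<in> LL V \<Longrightarrow> (u @ inv_word u, []) \<in> raag_rel V E"
proof (induction u)
  case Nil then show ?case using equiv_raag[of V E] by (simp add: equiv_def refl_on_def inv_word_def)
next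
  case (Cons x u)
  have x: "[x] \<in> LL V" "[inv_letter x] \<in> LL V" using Cons.prems by (auto simp: inv_letter_def)
  have "(x # u @ inv_word u @ [inv_letter x], [x] @ [] @ [inv_letter x]) \<in> raag_rel V E"
    using rel_app[OF Cons.IH x(1) x(2)] Cons.prems by simp
  moreover have "([] @ [x, inv_letter x] @ [], []) \<in> raag_rel V E"
    by (rule rel_step) (use x raag_step.cancel[of E "[]" x "[]"] in \<open>simp_all del: in_lists_conv_set\<close>)
  ultimately have "(x # u @ inv_word u @ [inv_letter x], []) \<in> raag_rel V E"
    using equiv_raag[of V E] unfolding equiv_def trans_def by (metis append.left_neutral append_Cons append_Nil2)
  then show ?case by (simp add: inv_word_def)
qed

lemma group_RAAG: "group (RAAG V E)"
proof (rule groupI)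
  fix x y assume "x \<in> carrier (RAAG V E)" "y \<in> carrier (RAAG V E)"
  then obtain u w where "u \<in> LL V" "w \<in> LL V" "x = cls V E u" "y = cls V E w"
    by (metis carrierE)
  then show "x \<otimes>\<^bsub>RAAG V E\<^esub> y \<in> carrier (RAAG V E)"
    by (simp only: mult_cls) (simp del: in_lists_conv_set)
next
  show "\<one>\<^bsub>RAAG V E\<^esub> \<in> carrier (RAAG V E)" by (simp add: one_RAAG)
next
  fix x y z assume "x \<in> carrier (RAAG V E)" "y \<in> carrier (RAAG V E)" "z \<in> carrier (RAAG V E)"
  then obtain u w t where "u \<in> LL V" "w \<in> LL V" "t \<in> LL V" "x = cls V E u" "y = cls V E w" "z = cls V E t"
    by (metis carrierE)
  then show "x \<otimes>\<^bsub>RAAG V E\<^esub> y \<otimes>\<^bsub>RAAG V E\<^esub> z = x \<otimes>\<^bsub>RAAG V E\<^esub> (y \<otimes>\<^bsub>RAAG V E\<^esub> z)"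
    by (simp del: in_lists_conv_set add: mult_cls)
next
  fix x assume "x \<in> carrier (RAAG V E)"
  then obtain u where "u \<in> LL V" "x = cls V E u" by (metis carrierE)
  then show "\<one>\<^bsub>RAAG V E\<^esub> \<otimes>\<^bsub>RAAG V E\<^esub> x = x"
    by (simp del: in_lists_conv_set add: mult_cls one_RAAG)
next
  fix x assume "x \<in> carrier (RAAG V E)"
  then obtain u where u: "u \<in> LL V" "x = cls V E u" by (metis carrierE)
  have "cls V E (inv_word u) \<otimes>\<^bsub>RAAG V E\<^esub> x = \<one>\<^bsub>RAAG V E\<^esub>"
    using u cls_eqI[OF right_inv_rel[OF inv_word_L[OF u(1)], of E]] inv_word_L[OF u(1)]
    by (simp del: in_lists_conv_set add: mult_cls one_RAAG)
  then show "\<exists>y\<in>carrier (RAAG V E). y \<otimes>\<^bsub>RAAG V E\<^esub> x = \<one>\<^bsub>RAAG V E\<^esub>"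
    using inv_word_L[OF u(1)] cls_in by blast
qed


lemma (in group) comm_inv:
  assumes "a \<in> carrier G" "b \<in> carrier G" "a \<otimes> b = b \<otimes> a"
  shows "inv a \<otimes> b = b \<otimes> inv a"
proof -
  have "inv a \<otimes> (a \<otimes> b) \<otimes> inv a = inv a \<otimes> (b \<otimes> a) \<otimes> inv a" using assms(3) by (rule arg_cong)
  moreover have "inv a \<otimes> (a \<otimes> b) \<otimes> inv a = b \<otimes> inv a" using assms(1,2) by (simp add: m_assoc[symmetric])
  moreover have "inv a \<otimes> (b \<otimes> a) \<otimes> inv a = inv a \<otimes> b" using assms(1,2) by (simp add: m_assoc)
  ultimately show ?thesis by simp
qed

lemma (in group) comm_int_pow:
  assumes "a \<in> carrier G" "b \<in> carrier G" "a \<otimes> b = b \<otimes> a"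
  shows "a [^] (n::int) \<otimes> b = b \<otimes> a [^] n"
proof -
  have P: "a [^] (k::nat) \<otimes> b = b \<otimes> a [^] k" for k
    using group_commutes_pow[OF assms(3) assms(1,2)] .
  have Q: "inv (a [^] (k::nat)) \<otimes> b = b \<otimes> inv (a [^] k)" for k
    using comm_inv[OF nat_pow_closed[OF assms(1)] assms(2) P] .
  show ?thesis
  proof (cases "n < 0")
    case True
    have "a [^] n = inv (a [^] nat (-n))" using int_pow_def2[of G a n] True by (simp only: if_True)
    then show ?thesis using Q by (simp only:)
  next
    case False
    have "a [^] n = a [^] nat n" using int_pow_def2[of G a n] False by (simp only: if_False)
    then show ?thesis using P by (simp only:)
  qed
qed

locale RG =
  fixes V :: "'a set" and E :: "('a \<times> 'a) set"
begin

abbreviation "G \<equiv> RAAG V E"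

sublocale group G by (rule group_RAAG)

definition gl :: "('a \<Rightarrow> 'a letter list set) \<Rightarrow> 'a letter \<Rightarrow> 'a letter list set" where
  "gl g x = (if snd x then g (fst x) else inv\<^bsub>G\<^esub> g (fst x))"

definition eval :: "('a \<Rightarrow> 'a letter list set) \<Rightarrow> 'a letter list \<Rightarrow> 'a letter list set" where
  "eval g u = foldr (\<lambda>x acc. gl g x \<otimes>\<^bsub>G\<^esub> acc) u \<one>\<^bsub>G\<^esub>"

definition gen :: "'a \<Rightarrow> 'a letter list set" where
  "gen v = cls V E [(v, True)]"

definition Ext :: "('a \<Rightarrow> 'a letter list set) \<Rightarrow> 'a letter list set \<Rightarrow> 'a letter list set" where
  "Ext g = (\<lambda>P \<in> carrier G. eval g (SOME u. u \<in> P))"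

lemma gl_closed: "g ` V \<subseteq> carrier G \<Longrightarrow> fst x \<in> V \<Longrightarrow> gl g x \<in> carrier G"
  by (auto simp: gl_def)

lemma eval_Nil [simp]: "eval g [] = \<one>\<^bsub>G\<^esub>"
  by (simp add: eval_def)

lemma eval_Cons: "eval g (x # u) = gl g x \<otimes>\<^bsub>G\<^esub> eval g u"
  by (simp add: eval_def)

lemma eval_closed: "g ` V \<subseteq> carrier G \<Longrightarrow> u \<in> LL V \<Longrightarrow> eval g u \<in> carrier G"
  by (induction u) (auto simp: eval_Cons intro!: gl_closed)

lemma eval_append: "g ` V \<subseteq> carrier G \<Longrightarrow> u \<in> LL V \<Longrightarrow> w \<in> LL V \<Longrightarrow>
    eval g (u @ w) = eval g u \<otimes>\<^bsub>G\<^esub> eval g w"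
proof (induction u)
  case Nil then show ?case using eval_closed by simp
next
  case (Cons x u)
  have "fst x \<in> V" "u \<in> LL V" using Cons.prems by (auto simp: mem_Times_iff)
  then show ?case using Cons by (simp add: eval_Cons m_assoc gl_closed eval_closed)
qed

lemma gl_inv: "g ` V \<subseteq> carrier G \<Longrightarrow> fst x \<in> V \<Longrightarrow> gl g x \<otimes>\<^bsub>G\<^esub> gl g (inv_letter x) = \<one>\<^bsub>G\<^esub>"
  by (auto simp: gl_def inv_letter_def)

lemma gl_comm:
  assumes g: "g ` V \<subseteq> carrier G" and x: "fst x \<in> V" "fst y \<in> V"
    and c: "g (fst x) \<otimes>\<^bsub>G\<^esub> g (fst y) = g (fst y) \<otimes>\<^bsub>G\<^esub> g (fst x)"
  shows "gl g x \<otimes>\<^bsub>G\<^esub> gl g y = gl g y \<otimes>\<^bsub>G\<^esub> gl g x"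
proof -
  have a: "g (fst x) \<in> carrier G" "g (fst y) \<in> carrier G" using g x by auto
  have c1: "inv\<^bsub>G\<^esub> g (fst x) \<otimes>\<^bsub>G\<^esub> g (fst y) = g (fst y) \<otimes>\<^bsub>G\<^esub> inv\<^bsub>G\<^esub> g (fst x)"
    using comm_inv a c by blast
  have c2: "inv\<^bsub>G\<^esub> g (fst y) \<otimes>\<^bsub>G\<^esub> g (fst x) = g (fst x) \<otimes>\<^bsub>G\<^esub> inv\<^bsub>G\<^esub> g (fst y)"
    using comm_inv a c by metis
  have c3: "inv\<^bsub>G\<^esub> g (fst x) \<otimes>\<^bsub>G\<^esub> inv\<^bsub>G\<^esub> g (fst y) = inv\<^bsub>G\<^esub> g (fst y) \<otimes>\<^bsub>G\<^esub> inv\<^bsub>G\<^esub> g (fst x)"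
    by (rule sym[OF comm_inv[OF a(2) inv_closed[OF a(1)] c1[symmetric]]])
  show ?thesis using c c1 c2 c3 by (simp add: gl_def)
qed

definition "gcomm g \<longleftrightarrow> (\<forall>v w. (v, w) \<in> E \<longrightarrow> v \<in> V \<longrightarrow> w \<in> V \<longrightarrow> g v \<otimes>\<^bsub>G\<^esub> g w = g w \<otimes>\<^bsub>G\<^esub> g v)"

lemma eval_step:
  assumes g: "g ` V \<subseteq> carrier G" "gcomm g" and st: "raag_step E u w" and L: "u \<in> LL V" "w \<in> LL V"
  shows "eval g u = eval g w"
  using st L
proof (cases rule: raag_step.cases)
  case (cancel p x q)
  have L2: "p \<in> LL V" "q \<in> LL V" "[x, inv_letter x] \<in> LL V" "fst x \<in> V" using L cancel by auto
  have "eval g [x, inv_letter x] = \<one>\<^bsub>G\<^esub>"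
    using gl_inv[OF g(1) L2(4)] g L2 by (simp add: eval_Cons gl_closed inv_letter_def)
  moreover have "eval g u = eval g p \<otimes>\<^bsub>G\<^esub> (eval g [x, inv_letter x] \<otimes>\<^bsub>G\<^esub> eval g q)"
    unfolding cancel(1) using eval_append[OF g(1) L2(1), of "[x, inv_letter x] @ q"]
      eval_append[OF g(1) L2(3) L2(2)] L2 by simp
  moreover have "eval g w = eval g p \<otimes>\<^bsub>G\<^esub> eval g q"
    unfolding cancel(2) using eval_append[OF g(1) L2(1) L2(2)] .
  ultimately show ?thesis using L2 g eval_closed by simp
next
  case (commute x y p q)
  have L2: "p \<in> LL V" "q \<in> LL V" "[x, y] \<in> LL V" "[y, x] \<in> LL V" "fst x \<in> V" "fst y \<in> V"
    using L commute by auto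
  have "g (fst x) \<otimes>\<^bsub>G\<^esub> g (fst y) = g (fst y) \<otimes>\<^bsub>G\<^esub> g (fst x)"
    using g(2) commute(3) L2 unfolding gcomm_def by blast
  note cc = this
  have "eval g [x, y] = eval g [y, x]"
    using gl_comm[OF g(1) L2(5,6) cc] L2 g(1) by (simp add: eval_Cons gl_closed)
  moreover have "eval g u = eval g p \<otimes>\<^bsub>G\<^esub> (eval g [x, y] \<otimes>\<^bsub>G\<^esub> eval g q)"
    unfolding commute(1) using eval_append[OF g(1) L2(1), of "[x, y] @ q"]
      eval_append[OF g(1) L2(3) L2(2)] L2 by simp
  moreover have "eval g w = eval g p \<otimes>\<^bsub>G\<^esub> (eval g [y, x] \<otimes>\<^bsub>G\<^esub> eval g q)"
    unfolding commute(2) using eval_append[OF g(1) L2(1), of "[y, x] @ q"]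
      eval_append[OF g(1) L2(4) L2(2)] L2 by simp
  ultimately show ?thesis by simp
qed

lemma eval_rel:
  assumes g: "g ` V \<subseteq> carrier G" "gcomm g" and r: "(u, w) \<in> raag_rel V E"
  shows "eval g u = eval g w"
proof -
  have "(u, w) \<in> (stepR V E \<union> (stepR V E)\<inverse>)\<^sup>*" using r unfolding raag_rel_alt by auto
  then show ?thesis
  proof (induction rule: rtrancl_induct)
    case (step y z)
    then show ?case using eval_step[OF g] by (auto simp: stepR_def)
  qed simp
qed

lemma Ext_cls: "g ` V \<subseteq> carrier G \<Longrightarrow> gcomm g \<Longrightarrow> u \<in> LL V \<Longrightarrow> Ext g (cls V E u) = eval g u"
proof -
  assume g: "g ` V \<subseteq> carrier G" "gcomm g" and u: "u \<in> LL V"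
  have "eval g u = eval g (SOME w. w \<in> cls V E u)" by (rule eval_rel[OF g rep_in[OF u]])
  then show ?thesis unfolding Ext_def using cls_in[OF u] by simp
qed

lemma Ext_hom: assumes "g ` V \<subseteq> carrier G" "gcomm g" shows "Ext g \<in> hom G G"
proof (rule homI)
  fix x assume "x \<in> carrier G"
  then obtain u where "u \<in> LL V" "x = cls V E u" by (metis carrierE)
  then show "Ext g x \<in> carrier G" using assms by (simp del: in_lists_conv_set add: Ext_cls eval_closed)
next
  fix x y assume "x \<in> carrier G" "y \<in> carrier G"
  then obtain u w where "u \<in> LL V" "w \<in> LL V" "x = cls V E u" "y = cls V E w"
    by (metis carrierE)
  then show "Ext g (x \<otimes>\<^bsub>G\<^esub> y) = Ext g x \<otimes>\<^bsub>G\<^esub> Ext g y" using assms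
    by (simp del: in_lists_conv_set add: Ext_cls eval_append mult_cls)
qed

lemma gen_closed [simp]: "v \<in> V \<Longrightarrow> gen v \<in> carrier G"
  unfolding gen_def by (rule cls_in) auto

lemma gen_img: "gen ` V \<subseteq> carrier G" by auto

lemma cls_neg: "v \<in> V \<Longrightarrow> cls V E [(v, False)] = inv\<^bsub>G\<^esub> gen v"
proof -
  assume v: "v \<in> V"
  have "raag_step E ([] @ [(v,False), inv_letter (v,False)] @ []) ([] @ [])" by (rule raag_step.cancel)
  then have "raag_step E [(v,False),(v,True)] []" by (simp add: inv_letter_def)
  then have "([(v,False),(v,True)], []) \<in> raag_rel V E" by (rule rel_step) (use v in simp_all)
  then have "cls V E [(v,False),(v,True)] = cls V E []" by (rule cls_eqI)
  then have "cls V E [(v,False)] \<otimes>\<^bsub>G\<^esub> gen v = \<one>\<^bsub>G\<^esub>"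
    unfolding gen_def one_RAAG using mult_cls[of "[(v,False)]" V "[(v,True)]" E] v by simp
  from inv_equality[OF this gen_closed[OF v] cls_in] v show ?thesis by simp
qed

lemma cls_eval: "u \<in> LL V \<Longrightarrow> cls V E u = eval gen u"
proof (induction u)
  case Nil then show ?case by (simp add: one_RAAG)
next
  case (Cons x u)
  obtain v b where x: "x = (v, b)" by (cases x)
  have v: "v \<in> V" "u \<in> LL V" using Cons x by auto
  have "cls V E (x # u) = cls V E [x] \<otimes>\<^bsub>G\<^esub> cls V E u"
    using mult_cls[of "[x]" V u E] Cons.prems by simp
  moreover have "cls V E [x] = gl gen x" using v x
    by (cases b) (simp_all add: gl_def gen_def cls_neg)
  ultimately show ?case using Cons v by (simp add: eval_Cons)
qed

lemma hinv: "h \<in> hom G G \<Longrightarrow> x \<in> carrier G \<Longrightarrow> h (inv\<^bsub>G\<^esub> x) = inv\<^bsub>G\<^esub> (h x)"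
  by (rule group_hom.hom_inv) (simp_all add: group_hom_def group_hom_axioms_def is_group)

lemma hom_eval:
  assumes h: "h \<in> hom G G" and g: "g ` V \<subseteq> carrier G" and u: "u \<in> LL V"
  shows "h (eval g u) = eval (h \<circ> g) u"
  using u
proof (induction u)
  case Nil then show ?case using h by (simp add: hom_one[OF h])
next
  case (Cons x u)
  obtain v b where x: "x = (v, b)" by (cases x)
  have v: "v \<in> V" "u \<in> LL V" using Cons x by auto
  have gv: "g v \<in> carrier G" using g v by auto
  have "h (gl g x) = gl (h \<circ> g) x" using gv x
    by (cases b) (simp_all add: gl_def hinv[OF h])
  then show ?case using Cons g h v x
    by (simp add: eval_Cons hom_mult[OF h] gl_closed eval_closed comp_def)
qed

lemma hom_ext_eq:
  assumes "h1 \<in> hom G G" "h2 \<in> hom G G" "\<And>v. v \<in> V \<Longrightarrow> h1 (gen v) = h2 (gen v)" "P \<in> carrier G"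
  shows "h1 P = h2 P"
proof -
  obtain u where u: "u \<in> LL V" "P = cls V E u" using assms(4) by (metis carrierE)
  have "eval (h1 \<circ> gen) u = eval (h2 \<circ> gen) u" using u(1)
  proof (induction u)
    case (Cons x u)
    obtain v b where x: "x = (v, b)" by (cases x)
    have v: "v \<in> V" "u \<in> LL V" using Cons x by auto
    then show ?case using Cons assms(3)[OF v(1)] x by (simp add: eval_Cons gl_def)
  qed simp
  then show ?thesis using u hom_eval[OF assms(1) gen_img] hom_eval[OF assms(2) gen_img] cls_eval by simp
qed

lemma Ext_gen: "g ` V \<subseteq> carrier G \<Longrightarrow> gcomm g \<Longrightarrow> v \<in> V \<Longrightarrow> Ext g (gen v) = g v"
proof -
  assume g: "g ` V \<subseteq> carrier G" "gcomm g" and v: "v \<in> V"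
  have "g v \<in> carrier G" using g v by auto
  then show ?thesis unfolding gen_def using Ext_cls[OF g, of "[(v,True)]"] v by (simp add: eval_Cons gl_def)
qed

lemma eval_commute:
  assumes g: "g ` V \<subseteq> carrier G" and z: "z \<in> carrier G"
    and c: "\<And>v. v \<in> V \<Longrightarrow> z \<otimes>\<^bsub>G\<^esub> g v = g v \<otimes>\<^bsub>G\<^esub> z" and u: "u \<in> LL V"
  shows "z \<otimes>\<^bsub>G\<^esub> eval g u = eval g u \<otimes>\<^bsub>G\<^esub> z"
  using u
proof (induction u)
  case Nil then show ?case using z by simp
next
  case (Cons x u)
  obtain v b where x: "x = (v, b)" by (cases x)
  have v: "v \<in> V" "u \<in> LL V" using Cons x by auto
  have gv: "g v \<in> carrier G" using g v by auto
  have gx: "gl g x \<in> carrier G" using g v x gl_closed by auto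
  have e: "eval g u \<in> carrier G" using g v eval_closed by auto
  have IH: "z \<otimes>\<^bsub>G\<^esub> eval g u = eval g u \<otimes>\<^bsub>G\<^esub> z" using Cons v by simp
  have cz: "z \<otimes>\<^bsub>G\<^esub> g v = g v \<otimes>\<^bsub>G\<^esub> z" using c v by simp
  have zx: "z \<otimes>\<^bsub>G\<^esub> gl g x = gl g x \<otimes>\<^bsub>G\<^esub> z"
  proof (cases b)
    case True then show ?thesis using cz x by (simp add: gl_def)
  next
    case False then show ?thesis using sym[OF comm_inv[OF gv z cz[symmetric]]] x by (simp add: gl_def)
  qed
  have "z \<otimes>\<^bsub>G\<^esub> (gl g x \<otimes>\<^bsub>G\<^esub> eval g u) = (z \<otimes>\<^bsub>G\<^esub> gl g x) \<otimes>\<^bsub>G\<^esub> eval g u"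
    using gx e z by (simp add: m_assoc)
  also have "\<dots> = gl g x \<otimes>\<^bsub>G\<^esub> (z \<otimes>\<^bsub>G\<^esub> eval g u)" using gx e z zx by (simp add: m_assoc)
  also have "\<dots> = (gl g x \<otimes>\<^bsub>G\<^esub> eval g u) \<otimes>\<^bsub>G\<^esub> z" using gx e z IH by (simp add: m_assoc)
  finally show ?case by (simp add: eval_Cons)
qed

lemma gen_comm: "(v, w) \<in> E \<Longrightarrow> v \<in> V \<Longrightarrow> w \<in> V \<Longrightarrow> gen v \<otimes>\<^bsub>G\<^esub> gen w = gen w \<otimes>\<^bsub>G\<^esub> gen v"
proof -
  assume e: "(v, w) \<in> E" and v: "v \<in> V" "w \<in> V"
  have "raag_step E ([] @ [(v,True), (w,True)] @ []) ([] @ [(w,True), (v,True)] @ [])"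
    by (rule raag_step.commute) (use e in simp)
  then have "raag_step E [(v,True), (w,True)] [(w,True), (v,True)]" by simp
  then have "([(v,True), (w,True)], [(w,True), (v,True)]) \<in> raag_rel V E" by (rule rel_step) (use v in simp_all)
  then have "cls V E [(v,True), (w,True)] = cls V E [(w,True), (v,True)]" by (rule cls_eqI)
  then show ?thesis unfolding gen_def
    using mult_cls[of "[(v,True)]" V "[(w,True)]" E] mult_cls[of "[(w,True)]" V "[(v,True)]" E] v by simp
qed

lemma central:
  assumes s: "social V E s" and P: "P \<in> carrier G"
  shows "gen s \<otimes>\<^bsub>G\<^esub> P = P \<otimes>\<^bsub>G\<^esub> gen s"
proof -
  obtain u where u: "u \<in> LL V" "P = cls V E u" using P by (metis carrierE)
  have sV: "s \<in> V" using s by (simp add: social_def)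
  have c: "gen s \<otimes>\<^bsub>G\<^esub> gen v = gen v \<otimes>\<^bsub>G\<^esub> gen s" if v: "v \<in> V" for v
  proof (cases "v = s")
    case False then show ?thesis using gen_comm[of s v] s v sV by (simp add: social_def)
  qed simp
  have "gen s \<otimes>\<^bsub>G\<^esub> eval gen u = eval gen u \<otimes>\<^bsub>G\<^esub> gen s"
    by (rule eval_commute[OF gen_img gen_closed[OF sV] c u(1)])
  then show ?thesis using u cls_eval by simp
qed

end


context RG begin

definition cent :: "'a letter list set \<Rightarrow> bool" where
  "cent x \<longleftrightarrow> x \<in> carrier G \<and> (\<forall>P \<in> carrier G. x \<otimes>\<^bsub>G\<^esub> P = P \<otimes>\<^bsub>G\<^esub> x)"

lemma cent_one: "cent \<one>\<^bsub>G\<^esub>" by (simp add: cent_def)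

lemma cent_mult: assumes "cent x" "cent y" shows "cent (x \<otimes>\<^bsub>G\<^esub> y)"
proof -
  have x: "x \<in> carrier G" and y: "y \<in> carrier G" using assms by (auto simp: cent_def)
  have "x \<otimes>\<^bsub>G\<^esub> y \<otimes>\<^bsub>G\<^esub> P = P \<otimes>\<^bsub>G\<^esub> (x \<otimes>\<^bsub>G\<^esub> y)" if P: "P \<in> carrier G" for P
  proof -
    have "x \<otimes>\<^bsub>G\<^esub> y \<otimes>\<^bsub>G\<^esub> P = x \<otimes>\<^bsub>G\<^esub> (y \<otimes>\<^bsub>G\<^esub> P)" using x y P by (simp add: m_assoc)
    also have "\<dots> = x \<otimes>\<^bsub>G\<^esub> (P \<otimes>\<^bsub>G\<^esub> y)" using assms(2) P by (simp add: cent_def)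
    also have "\<dots> = (x \<otimes>\<^bsub>G\<^esub> P) \<otimes>\<^bsub>G\<^esub> y" using x y P by (simp add: m_assoc)
    also have "\<dots> = (P \<otimes>\<^bsub>G\<^esub> x) \<otimes>\<^bsub>G\<^esub> y" using assms(1) P by (simp add: cent_def)
    also have "\<dots> = P \<otimes>\<^bsub>G\<^esub> (x \<otimes>\<^bsub>G\<^esub> y)" using x y P by (simp add: m_assoc)
    finally show ?thesis .
  qed
  then show ?thesis using x y by (simp add: cent_def)
qed

lemma cent_pow: assumes "cent x" shows "cent (x [^]\<^bsub>G\<^esub> (k::int))"
  using assms comm_int_pow by (simp add: cent_def)

lemma cent_gen: "social V E s \<Longrightarrow> cent (gen s)"
  using central by (simp add: cent_def social_def)

lemma cent_comm:
  assumes a: "a \<in> carrier G" and b: "b \<in> carrier G" and ab: "a \<otimes>\<^bsub>G\<^esub> b = b \<otimes>\<^bsub>G\<^esub> a"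
    and P: "cent P" and Q: "cent Q"
  shows "(a \<otimes>\<^bsub>G\<^esub> P) \<otimes>\<^bsub>G\<^esub> (b \<otimes>\<^bsub>G\<^esub> Q) = (b \<otimes>\<^bsub>G\<^esub> Q) \<otimes>\<^bsub>G\<^esub> (a \<otimes>\<^bsub>G\<^esub> P)"
proof -
  have p: "P \<in> carrier G" and q: "Q \<in> carrier G" using P Q by (auto simp: cent_def)
  have 1: "(a \<otimes>\<^bsub>G\<^esub> P) \<otimes>\<^bsub>G\<^esub> (b \<otimes>\<^bsub>G\<^esub> Q) = a \<otimes>\<^bsub>G\<^esub> (P \<otimes>\<^bsub>G\<^esub> (b \<otimes>\<^bsub>G\<^esub> Q))"
    using a b p q by (simp add: m_assoc)
  also have "\<dots> = a \<otimes>\<^bsub>G\<^esub> ((b \<otimes>\<^bsub>G\<^esub> Q) \<otimes>\<^bsub>G\<^esub> P)" using P b q by (simp add: cent_def)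
  also have "\<dots> = (a \<otimes>\<^bsub>G\<^esub> b) \<otimes>\<^bsub>G\<^esub> (Q \<otimes>\<^bsub>G\<^esub> P)" using a b p q by (simp add: m_assoc)
  finally have L: "(a \<otimes>\<^bsub>G\<^esub> P) \<otimes>\<^bsub>G\<^esub> (b \<otimes>\<^bsub>G\<^esub> Q) = (a \<otimes>\<^bsub>G\<^esub> b) \<otimes>\<^bsub>G\<^esub> (Q \<otimes>\<^bsub>G\<^esub> P)" .
  have "(b \<otimes>\<^bsub>G\<^esub> Q) \<otimes>\<^bsub>G\<^esub> (a \<otimes>\<^bsub>G\<^esub> P) = b \<otimes>\<^bsub>G\<^esub> (Q \<otimes>\<^bsub>G\<^esub> (a \<otimes>\<^bsub>G\<^esub> P))"
    using a b p q by (simp add: m_assoc)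
  also have "\<dots> = b \<otimes>\<^bsub>G\<^esub> ((a \<otimes>\<^bsub>G\<^esub> P) \<otimes>\<^bsub>G\<^esub> Q)" using Q a p by (simp add: cent_def)
  also have "\<dots> = (b \<otimes>\<^bsub>G\<^esub> a) \<otimes>\<^bsub>G\<^esub> (P \<otimes>\<^bsub>G\<^esub> Q)" using a b p q by (simp add: m_assoc)
  finally have R: "(b \<otimes>\<^bsub>G\<^esub> Q) \<otimes>\<^bsub>G\<^esub> (a \<otimes>\<^bsub>G\<^esub> P) = (b \<otimes>\<^bsub>G\<^esub> a) \<otimes>\<^bsub>G\<^esub> (P \<otimes>\<^bsub>G\<^esub> Q)" .
  have "P \<otimes>\<^bsub>G\<^esub> Q = Q \<otimes>\<^bsub>G\<^esub> P" using P q by (simp add: cent_def)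
  then show ?thesis using L R ab by simp
qed

definition cw :: "'a \<Rightarrow> 'a letter \<Rightarrow> int" where
  "cw s x = (if fst x = s then (if snd x then 1 else -1) else 0)"

definition cntw :: "'a \<Rightarrow> 'a letter list \<Rightarrow> int" where
  "cntw s u = sum_list (map (cw s) u)"

lemma cnt_step: "raag_step E u w \<Longrightarrow> cntw s u = cntw s w"
proof (induction rule: raag_step.induct)
  case (cancel u x w)
  then show ?case by (simp add: cntw_def cw_def inv_letter_def)
next
  case (commute x y u w)
  then show ?case by (simp add: cntw_def)
qed

lemma cnt_rel: assumes r: "(u, w) \<in> raag_rel V E" shows "cntw s u = cntw s w"
proof -
  have "(u, w) \<in> (stepR V E \<union> (stepR V E)\<inverse>)\<^sup>*" using r unfolding raag_rel_alt by auto
  then show ?thesis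
  proof (induction rule: rtrancl_induct)
    case (step y z)
    then show ?case using cnt_step[of y z s] cnt_step[of z y s] by (auto simp: stepR_def)
  qed simp
qed

definition cntG :: "'a \<Rightarrow> 'a letter list set \<Rightarrow> int" where
  "cntG s P = cntw s (SOME u. u \<in> P)"

lemma cntG_cls: "u \<in> LL V \<Longrightarrow> cntG s (cls V E u) = cntw s u"
  unfolding cntG_def using cnt_rel[OF rep_in, of u s] by simp

lemma cntG_hom: "cntG s \<in> hom G integer_group"
proof (rule homI)
  fix x y assume "x \<in> carrier G" "y \<in> carrier G"
  then obtain u w where "u \<in> LL V" "w \<in> LL V" "x = cls V E u" "y = cls V E w"
    by (metis carrierE)
  then show "cntG s (x \<otimes>\<^bsub>G\<^esub> y) = cntG s x \<otimes>\<^bsub>integer_group\<^esub> cntG s y"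
    by (simp add: mult_cls cntG_cls integer_group_def cntw_def)
qed (simp add: integer_group_def)

lemma cntG_gen: "v \<in> V \<Longrightarrow> cntG s (gen v) = (if v = s then 1 else 0)"
  unfolding gen_def by (simp add: cntG_cls cntw_def cw_def)

lemma cntG_mult: "x \<in> carrier G \<Longrightarrow> y \<in> carrier G \<Longrightarrow> cntG s (x \<otimes>\<^bsub>G\<^esub> y) = cntG s x + cntG s y"
  using hom_mult[OF cntG_hom] by (simp add: integer_group_def)

lemma cntG_pow: "x \<in> carrier G \<Longrightarrow> cntG s (x [^]\<^bsub>G\<^esub> (k::int)) = k * cntG s x"
  using hom_int_pow[OF cntG_hom _ is_group group_integer_group] by simp

end

locale RG2 = RG V E for V :: "'a set" and E +
  fixes sl :: "'a list"
  assumes sl: "set sl = {s. social V E s}" and dsl: "distinct sl"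
begin

abbreviation "D \<equiv> V - set sl"

lemma sl_V: "s \<in> set sl \<Longrightarrow> s \<in> V" using sl by (auto simp: social_def)
lemma sl_soc: "s \<in> set sl \<Longrightarrow> social V E s" using sl by auto

definition pf :: "'a list \<Rightarrow> ('a \<times> 'a \<Rightarrow>\<^sub>0 int) \<Rightarrow> 'a \<Rightarrow> 'a letter list set" where
  "pf ts c a = foldr (\<lambda>s acc. gen s [^]\<^bsub>G\<^esub> Poly_Mapping.lookup c (s, a) \<otimes>\<^bsub>G\<^esub> acc) ts \<one>\<^bsub>G\<^esub>"

lemma pf_Nil [simp]: "pf [] c a = \<one>\<^bsub>G\<^esub>" by (simp add: pf_def)
lemma pf_Cons: "pf (t # ts) c a = gen t [^]\<^bsub>G\<^esub> Poly_Mapping.lookup c (t, a) \<otimes>\<^bsub>G\<^esub> pf ts c a"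
  by (simp add: pf_def)

lemma pf_cent: "set ts \<subseteq> set sl \<Longrightarrow> cent (pf ts c a)"
  by (induction ts) (auto simp: pf_Cons cent_one intro!: cent_mult cent_pow cent_gen sl_soc)

lemma pf_closed: "set ts \<subseteq> set sl \<Longrightarrow> pf ts c a \<in> carrier G"
  using pf_cent by (simp add: cent_def)

lemma pf_add: "set ts \<subseteq> set sl \<Longrightarrow> pf ts c a \<otimes>\<^bsub>G\<^esub> pf ts d a = pf ts (c + d) a"
proof (induction ts)
  case Nil then show ?case by simp
next
  case (Cons t ts)
  have t: "t \<in> V" "set ts \<subseteq> set sl" using Cons.prems sl_V by auto
  let ?x = "gen t [^]\<^bsub>G\<^esub> Poly_Mapping.lookup c (t, a)" and ?y = "gen t [^]\<^bsub>G\<^esub> Poly_Mapping.lookup d (t, a)"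
  have x: "?x \<in> carrier G" "?y \<in> carrier G" using t by auto
  have A: "cent (pf ts c a)" "pf ts c a \<in> carrier G" "pf ts d a \<in> carrier G"
    using pf_cent[OF t(2)] pf_closed[OF t(2)] by (auto simp: cent_def)
  have "pf (t # ts) c a \<otimes>\<^bsub>G\<^esub> pf (t # ts) d a
      = ?x \<otimes>\<^bsub>G\<^esub> (pf ts c a \<otimes>\<^bsub>G\<^esub> (?y \<otimes>\<^bsub>G\<^esub> pf ts d a))"
    using x A by (simp add: pf_Cons m_assoc)
  also have "\<dots> = ?x \<otimes>\<^bsub>G\<^esub> ((pf ts c a \<otimes>\<^bsub>G\<^esub> ?y) \<otimes>\<^bsub>G\<^esub> pf ts d a)"
    using x A by (simp add: m_assoc)
  also have "\<dots> = ?x \<otimes>\<^bsub>G\<^esub> ((?y \<otimes>\<^bsub>G\<^esub> pf ts c a) \<otimes>\<^bsub>G\<^esub> pf ts d a)"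
    using x A by (simp add: cent_def)
  also have "\<dots> = (?x \<otimes>\<^bsub>G\<^esub> ?y) \<otimes>\<^bsub>G\<^esub> (pf ts c a \<otimes>\<^bsub>G\<^esub> pf ts d a)"
    using x A by (simp add: m_assoc)
  also have "\<dots> = gen t [^]\<^bsub>G\<^esub> Poly_Mapping.lookup (c + d) (t, a) \<otimes>\<^bsub>G\<^esub> pf ts (c + d) a"
    using Cons t by (simp add: Poly_Mapping.lookup_add int_pow_mult)
  finally show ?case by (simp add: pf_Cons)
qed

lemma pf_zero: "(\<And>t. t \<in> set ts \<Longrightarrow> Poly_Mapping.lookup c (t, a) = 0) \<Longrightarrow> set ts \<subseteq> set sl \<Longrightarrow> pf ts c a = \<one>\<^bsub>G\<^esub>"
  by (induction ts) (auto simp: pf_Cons)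

lemma pf_hom: "h \<in> hom G G \<Longrightarrow> (\<And>s. s \<in> set ts \<Longrightarrow> h (gen s) = gen s) \<Longrightarrow> set ts \<subseteq> set sl \<Longrightarrow>
    h (pf ts c a) = pf ts c a"
proof (induction ts)
  case Nil then show ?case by (simp add: hom_one)
next
  case (Cons t ts)
  have t: "t \<in> V" "set ts \<subseteq> set sl" using Cons.prems sl_V by auto
  have "h (gen t [^]\<^bsub>G\<^esub> Poly_Mapping.lookup c (t, a)) = gen t [^]\<^bsub>G\<^esub> Poly_Mapping.lookup c (t, a)"
    using hom_int_pow[OF Cons.prems(1) gen_closed[OF t(1)] is_group is_group] Cons.prems(2) by simp
  then show ?case using Cons t pf_closed[OF t(2)] by (simp add: pf_Cons hom_mult)
qed

lemma pf_single: "distinct ts \<Longrightarrow> set ts \<subseteq> set sl \<Longrightarrow> s \<in> set ts \<Longrightarrow> pf ts (frag_of (s, a)) a = gen s"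
proof (induction ts)
  case Nil then show ?case by simp
next
  case (Cons t ts)
  have t: "t \<in> V" "set ts \<subseteq> set sl" using Cons.prems sl_V by auto
  show ?case
  proof (cases "t = s")
    case True
    then have "pf ts (frag_of (s, a)) a = \<one>\<^bsub>G\<^esub>" using Cons.prems t by (intro pf_zero) auto
    then show ?thesis using True t by (simp add: pf_Cons)
  next
    case False
    have "s \<in> V" using Cons.prems sl_V by auto
    then show ?thesis using Cons t False by (simp add: pf_Cons)
  qed
qed

lemma cnt_pf: "distinct ts \<Longrightarrow> set ts \<subseteq> set sl \<Longrightarrow>
    cntG s (pf ts c a) = (if s \<in> set ts then Poly_Mapping.lookup c (s, a) else 0)"
proof (induction ts)
  case Nil then show ?case by (simp add: one_RAAG cntG_cls cntw_def)
next
  case (Cons t ts)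
  have t: "t \<in> V" "set ts \<subseteq> set sl" using Cons.prems sl_V by auto
  have "cntG s (pf (t # ts) c a) = Poly_Mapping.lookup c (t, a) * cntG s (gen t) + cntG s (pf ts c a)"
    using t pf_closed[OF t(2)] by (simp add: pf_Cons cntG_mult cntG_pow)
  then show ?case using Cons t by (auto simp: cntG_gen)
qed

definition Qc :: "('a \<times> 'a \<Rightarrow>\<^sub>0 int) \<Rightarrow> 'a \<Rightarrow> 'a letter list set" where
  "Qc c v = (if v \<in> D then pf sl c v else \<one>\<^bsub>G\<^esub>)"

definition gc :: "('a \<times> 'a \<Rightarrow>\<^sub>0 int) \<Rightarrow> 'a \<Rightarrow> 'a letter list set" where
  "gc c v = gen v \<otimes>\<^bsub>G\<^esub> Qc c v"

definition T :: "('a \<times> 'a \<Rightarrow>\<^sub>0 int) \<Rightarrow> 'a letter list set \<Rightarrow> 'a letter list set" where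
  "T c = Ext (gc c)"

lemma Qc_cent: "cent (Qc c v)"
  by (simp add: Qc_def cent_one pf_cent)

lemma Qc_closed: "Qc c v \<in> carrier G"
  using Qc_cent by (simp add: cent_def)

lemma gc_img: "gc c ` V \<subseteq> carrier G"
  using Qc_closed by (auto simp: gc_def)

lemma gc_comm: "gcomm (gc c)"
  unfolding gcomm_def gc_def
proof (intro allI impI)
  fix v w assume "(v, w) \<in> E" "v \<in> V" "w \<in> V"
  then show "gen v \<otimes>\<^bsub>G\<^esub> Qc c v \<otimes>\<^bsub>G\<^esub> (gen w \<otimes>\<^bsub>G\<^esub> Qc c w) = gen w \<otimes>\<^bsub>G\<^esub> Qc c w \<otimes>\<^bsub>G\<^esub> (gen v \<otimes>\<^bsub>G\<^esub> Qc c v)"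
    by (intro cent_comm gen_closed gen_comm Qc_cent)
qed

lemma T_hom: "T c \<in> hom G G"
  unfolding T_def by (rule Ext_hom[OF gc_img gc_comm])

lemma T_gen: "v \<in> V \<Longrightarrow> T c (gen v) = gen v \<otimes>\<^bsub>G\<^esub> Qc c v"
  unfolding T_def using Ext_gen[OF gc_img gc_comm] by (simp add: gc_def)

lemma T_fix: "s \<in> set sl \<Longrightarrow> T c (gen s) = gen s"
  using T_gen[of s c] sl_V[of s] by (simp add: Qc_def)

lemma T_Qc: "T c (Qc d v) = Qc d v"
  unfolding Qc_def using pf_hom[OF T_hom T_fix] by (simp add: hom_one[OF T_hom])

lemma Qc_add: "Qc c v \<otimes>\<^bsub>G\<^esub> Qc d v = Qc (c + d) v"
  unfolding Qc_def using pf_add[of sl c v d] by simp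

lemma T_comp: "P \<in> carrier G \<Longrightarrow> T c (T d P) = T (c + d) P"
proof -
  assume P: "P \<in> carrier G"
  have h1: "T c \<circ> T d \<in> hom G G" by (rule Group.hom_compose[OF T_hom T_hom])
  have "(T c \<circ> T d) P = T (c + d) P"
  proof (rule hom_ext_eq[OF h1 T_hom _ P])
    fix v assume v: "v \<in> V"
    have "(T c \<circ> T d) (gen v) = T c (gen v) \<otimes>\<^bsub>G\<^esub> T c (Qc d v)"
      using v Qc_closed by (simp add: T_gen hom_mult[OF T_hom])
    also have "\<dots> = gen v \<otimes>\<^bsub>G\<^esub> (Qc c v \<otimes>\<^bsub>G\<^esub> Qc d v)"
      using v Qc_closed by (simp add: T_gen T_Qc m_assoc)
    finally show "(T c \<circ> T d) (gen v) = T (c + d) (gen v)" using v by (simp add: Qc_add T_gen)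
  qed
  then show ?thesis by simp
qed

lemma T_zero: "P \<in> carrier G \<Longrightarrow> T 0 P = P"
proof -
  assume P: "P \<in> carrier G"
  have h2: "(\<lambda>x \<in> carrier G. x) \<in> hom G G" by (rule homI) auto
  have "T 0 P = (\<lambda>x \<in> carrier G. x) P"
  proof (rule hom_ext_eq[OF T_hom h2 _ P])
    fix v assume v: "v \<in> V"
    have "pf sl 0 v = \<one>\<^bsub>G\<^esub>" by (rule pf_zero) auto
    then show "T 0 (gen v) = (\<lambda>x \<in> carrier G. x) (gen v)" using v by (simp add: T_gen Qc_def)
  qed
  then show ?thesis using P by simp
qed

lemma T_closed: "P \<in> carrier G \<Longrightarrow> T c P \<in> carrier G"
  by (rule hom_in_carrier[OF T_hom])

lemma T_ext: "T c \<in> extensional (carrier G)"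
  unfolding T_def Ext_def by simp

lemma T_auto: "T c \<in> auto G"
proof -
  have "bij_betw (T c) (carrier G) (carrier G)"
    by (rule bij_betw_byWitness[where f' = "T (- c)"]) (auto simp: T_comp T_zero T_closed)
  then show ?thesis using T_hom T_ext by (simp add: auto_def Bij_def)
qed


abbreviation "AG \<equiv> AutoGroup G"

lemma AG_group: "group AG" by (rule group.AutoGroup[OF is_group])

lemma carrier_AG: "carrier AG = auto G" by (simp add: AutoGroup_def BijGroup_def)

lemma T_Bij: "T c \<in> Bij (carrier G)" using T_auto by (simp add: auto_def)

lemma T_in_AG: "T c \<in> carrier AG" using T_auto carrier_AG by simp

lemma T_mult: "T c \<otimes>\<^bsub>AG\<^esub> T d = T (c + d)"
proof -
  have "T c \<otimes>\<^bsub>AG\<^esub> T d = compose (carrier G) (T c) (T d)"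
    using T_Bij by (simp add: AutoGroup_def BijGroup_def)
  also have "\<dots> = T (c + d)"
  proof (rule ext)
    fix x show "compose (carrier G) (T c) (T d) x = T (c + d) x"
      by (cases "x \<in> carrier G") (simp_all add: compose_def T_comp, simp add: T_def Ext_def)
  qed
  finally show ?thesis .
qed

lemma T_one: "T 0 = \<one>\<^bsub>AG\<^esub>"
proof -
  have "\<one>\<^bsub>AG\<^esub> = (\<lambda>x \<in> carrier G. x)" by (simp add: AutoGroup_def BijGroup_def)
  moreover have "T 0 = (\<lambda>x \<in> carrier G. x)"
  proof (rule ext)
    fix x show "T 0 x = (\<lambda>x \<in> carrier G. x) x"
      by (cases "x \<in> carrier G") (simp_all add: T_zero, simp add: T_def Ext_def)
  qed
  ultimately show ?thesis by simp
qed

lemma T_inv: "inv\<^bsub>AG\<^esub> (T c) = T (- c)"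
proof -
  have "T (- c) \<otimes>\<^bsub>AG\<^esub> T c = \<one>\<^bsub>AG\<^esub>" by (simp add: T_mult T_one[symmetric])
  then show ?thesis by (rule group.inv_equality[OF AG_group _ T_in_AG T_in_AG])
qed

lemma gc_single_a: "s \<in> set sl \<Longrightarrow> a \<in> D \<Longrightarrow> gc (frag_of (s, a)) a = gen a \<otimes>\<^bsub>G\<^esub> gen s"
  unfolding gc_def Qc_def using pf_single[OF dsl, of s a] by simp

lemma gc_single_v: "s \<in> set sl \<Longrightarrow> v \<in> V \<Longrightarrow> v \<noteq> a \<Longrightarrow> gc (frag_of (s, a)) v = gen v"
proof -
  assume "s \<in> set sl" "v \<in> V" "v \<noteq> a"
  moreover have "pf sl (frag_of (s, a)) v = \<one>\<^bsub>G\<^esub>" using \<open>v \<noteq> a\<close> by (intro pf_zero) auto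
  ultimately show ?thesis unfolding gc_def Qc_def by simp
qed

lemma transv_eval:
  assumes s: "s \<in> set sl" and a: "a \<in> D" and u: "u \<in> LL V"
  shows "cls V E (concat (map (transv_letter s a) u)) = eval (gc (frag_of (s, a))) u"
  using u
proof (induction u)
  case Nil then show ?case by (simp add: one_RAAG)
next
  case (Cons x u)
  obtain v b where x: "x = (v, b)" by (cases x)
  have v: "v \<in> V" "u \<in> LL V" using Cons x by auto
  have sV: "s \<in> V" and aV: "a \<in> V" using s a sl_V by auto
  have tlL: "transv_letter s a y \<in> LL V" if "fst y \<in> V" for y
    using that sV aV by (auto simp: transv_letter_def mem_Times_iff)
  have all: "transv_letter s a y \<in> LL V" if "y \<in> set u" for y
  proof -
    have "y \<in> V \<times> UNIV" using v(2) that by blast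
    then show ?thesis by (intro tlL) (simp add: mem_Times_iff)
  qed
  have restL: "concat (map (transv_letter s a) u) \<in> LL V"
    using all by (induction u) simp_all
  have "cls V E (concat (map (transv_letter s a) (x # u)))
      = cls V E (transv_letter s a x) \<otimes>\<^bsub>G\<^esub> cls V E (concat (map (transv_letter s a) u))"
    using mult_cls[OF tlL restL] v x by simp
  moreover have "cls V E (transv_letter s a x) = gl (gc (frag_of (s, a))) x"
  proof (cases "v = a")
    case True
    show ?thesis
    proof (cases b)
      case b: True
      have "cls V E [(a, True), (s, True)] = gen a \<otimes>\<^bsub>G\<^esub> gen s"
        unfolding gen_def using mult_cls[of "[(a,True)]" V "[(s,True)]" E] sV aV by simp
      then show ?thesis using True b x s a by (simp add: transv_letter_def gl_def gc_single_a)
    next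
      case b: False
      have "cls V E [(s, False), (a, False)] = inv\<^bsub>G\<^esub> gen s \<otimes>\<^bsub>G\<^esub> inv\<^bsub>G\<^esub> gen a"
        using mult_cls[of "[(s,False)]" V "[(a,False)]" E] sV aV by (simp add: cls_neg)
      also have "\<dots> = inv\<^bsub>G\<^esub> (gen a \<otimes>\<^bsub>G\<^esub> gen s)" using sV aV by (simp add: inv_mult_group)
      finally show ?thesis using True b x s a by (simp add: transv_letter_def gl_def gc_single_a)
    qed
  next
    case False
    have "cls V E [x] = gl gen x" using cls_eval[of "[x]"] v x by (simp add: eval_Cons gl_closed[OF gen_img])
    then show ?thesis using False x s v by (simp add: transv_letter_def gl_def gc_single_v)
  qed
  ultimately show ?case using Cons v by (simp add: eval_Cons)
qed

lemma transv_T: "s \<in> set sl \<Longrightarrow> a \<in> D \<Longrightarrow> lateral_transvection V E s a = T (frag_of (s, a))"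
proof (rule ext)
  fix P assume s: "s \<in> set sl" and a: "a \<in> D"
  show "lateral_transvection V E s a P = T (frag_of (s, a)) P"
  proof (cases "P \<in> carrier G")
    case True
    then obtain u0 where u0: "u0 \<in> LL V" "P = cls V E u0" by (metis carrierE)
    have "(u0, SOME w. w \<in> P) \<in> raag_rel V E" using rep_in[OF u0(1)] u0 by simp
    then have u: "(SOME w. w \<in> P) \<in> LL V" using rel_L by blast
    have "T (frag_of (s, a)) P = eval (gc (frag_of (s, a))) (SOME w. w \<in> P)"
      using True by (simp add: T_def Ext_def)
    then show ?thesis using True transv_eval[OF s a u] by (simp add: lateral_transvection_def)
  next
    case False
    then show ?thesis by (simp add: lateral_transvection_def T_def Ext_def)
  qed
qed

lemma T_inj:
  assumes c: "Poly_Mapping.keys c \<subseteq> set sl \<times> D" and d: "Poly_Mapping.keys d \<subseteq> set sl \<times> D"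
    and eq: "T c = T d"
  shows "c = d"
proof (rule poly_mapping_eqI)
  fix k
  show "Poly_Mapping.lookup c k = Poly_Mapping.lookup d k"
  proof (cases "k \<in> set sl \<times> D")
    case True
    then obtain s a where k: "k = (s, a)" "s \<in> set sl" "a \<in> D" by auto
    have cnt: "cntG s (T e (gen a)) = Poly_Mapping.lookup e (s, a)" for e
    proof -
      have "a \<noteq> s" using k by auto
      then show ?thesis using k T_gen[of a e] pf_closed[of sl e a] cnt_pf[OF dsl, of s e a]
        by (simp add: Qc_def cntG_mult cntG_gen)
    qed
    show ?thesis using cnt[of c] cnt[of d] eq k by simp
  next
    case False
    then have "k \<notin> Poly_Mapping.keys c" "k \<notin> Poly_Mapping.keys d" using c d by auto
    then show ?thesis by (simp add: Poly_Mapping.in_keys_iff)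
  qed
qed

definition "XX = {lateral_transvection V E s a | s a. s \<in> set sl \<and> a \<in> D}"

lemma XX_eq: "XX = (\<lambda>(s, a). T (frag_of (s, a))) ` (set sl \<times> D)"
  unfolding XX_def using transv_T by force

lemma XX_sub: "XX \<subseteq> carrier AG" using XX_eq T_in_AG by auto

lemma gen_sub: "carrier (subgroup_generated AG XX) = generate AG XX"
  using XX_sub by (simp add: carrier_subgroup_generated Int_absorb1)

lemma T_in_gen:
  assumes "Poly_Mapping.keys c \<subseteq> set sl \<times> D" shows "T c \<in> generate AG XX"
proof (rule free_Abelian_group_induct[where P = "\<lambda>c. T c \<in> generate AG XX", OF assms])
  show "T 0 \<in> generate AG XX" by (simp add: T_one generate.one)
next
  fix x y assume "T x \<in> generate AG XX" "T y \<in> generate AG XX"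
  have sub: "subgroup (generate AG XX) AG" by (rule group.generate_is_subgroup[OF AG_group XX_sub])
  have "T (x - y) = T x \<otimes>\<^bsub>AG\<^esub> inv\<^bsub>AG\<^esub> (T y)" by (simp add: T_inv T_mult)
  then show "T (x - y) \<in> generate AG XX"
    using \<open>T x \<in> generate AG XX\<close> \<open>T y \<in> generate AG XX\<close>
      subgroup.m_closed[OF sub] subgroup.m_inv_closed[OF sub] by simp
next
  fix k assume "k \<in> set sl \<times> D"
  then obtain s a where "k = (s, a)" "s \<in> set sl" "a \<in> D" by auto
  then show "T (frag_of k) \<in> generate AG XX" using XX_eq by (auto intro!: generate.incl)
qed

lemma gen_in_T: "h \<in> generate AG XX \<Longrightarrow> \<exists>c. Poly_Mapping.keys c \<subseteq> set sl \<times> D \<and> h = T c"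
proof (induction rule: generate.induct)
  case one then show ?case using T_one by (intro exI[of _ 0]) auto
next
  case (incl h)
  then obtain s a where "s \<in> set sl" "a \<in> D" "h = T (frag_of (s, a))" using XX_eq by auto
  then show ?case by (intro exI[of _ "frag_of (s, a)"]) auto
next
  case (inv h)
  then obtain s a where "s \<in> set sl" "a \<in> D" "h = T (frag_of (s, a))" using XX_eq by auto
  then show ?case by (intro exI[of _ "- frag_of (s, a)"]) (auto simp: T_inv)
next
  case (eng h1 h2)
  then obtain c d where "Poly_Mapping.keys c \<subseteq> set sl \<times> D" "h1 = T c"
    "Poly_Mapping.keys d \<subseteq> set sl \<times> D" "h2 = T d" by blast
  then show ?case using keys_add[of c d] by (intro exI[of _ "c + d"]) (auto simp: T_mult)
qed

lemma main_iso: "subgroup_generated AG XX \<cong> free_Abelian_group (set sl \<times> D)"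
proof -
  let ?F = "free_Abelian_group (set sl \<times> D)" and ?SG = "subgroup_generated AG XX"
  have "T \<in> iso ?F ?SG"
  proof (rule isoI)
    show "T \<in> hom ?F ?SG"
    proof (rule homI)
      fix c assume "c \<in> carrier ?F"
      then show "T c \<in> carrier ?SG" using T_in_gen gen_sub by simp
    next
      fix c d assume "c \<in> carrier ?F" "d \<in> carrier ?F"
      then show "T (c \<otimes>\<^bsub>?F\<^esub> d) = T c \<otimes>\<^bsub>?SG\<^esub> T d"
        by (simp add: subgroup_generated_def T_mult)
    qed
    show "bij_betw T (carrier ?F) (carrier ?SG)"
      unfolding bij_betw_def
    proof
      show "inj_on T (carrier ?F)" by (rule inj_onI) (use T_inj in auto)
      show "T ` carrier ?F = carrier ?SG" unfolding gen_sub
        using T_in_gen gen_in_T by fastforce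
    qed
  qed
  then have "?F \<cong> ?SG" by (rule is_isoI)
  then show ?thesis by (rule group.iso_sym[OF group_free_Abelian_group])
qed

end


theorem mainTheorem3:
  fixes V :: "'a set" and E :: "('a \<times> 'a) set"
  assumes "simplicial_graph V E"
    and "centre (RAAG V E) \<noteq> {\<one>\<^bsub>RAAG V E\<^esub>}"
  defines "S \<equiv> {s. social V E s}"
    and "\<Delta> \<equiv> V - {s. social V E s}"
  shows "subgroup_generated (AutoGroup (RAAG V E))
           {lateral_transvection V E s a | s a. s \<in> S \<and> a \<in> \<Delta>}
         \<cong> free_Abelian_group {..< card S * card \<Delta>}"
proof -
  have fin: "finite V" using assms(1) by (simp add: simplicial_graph_def)
  have finS: "finite S" unfolding S_def using fin by (rule finite_subset[rotated]) (auto simp: social_def)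
  have finD: "finite \<Delta>" unfolding \<Delta>_def using fin by simp
  obtain sl where sl: "set sl = S" "distinct sl" using finite_distinct_list[OF finS] by blast
  interpret R: RG2 V E sl by unfold_locales (use sl S_def in auto)
  have D: "\<Delta> = V - set sl" unfolding \<Delta>_def using sl S_def by simp
  have X: "{lateral_transvection V E s a | s a. s \<in> S \<and> a \<in> \<Delta>} = R.XX"
    unfolding R.XX_def D sl(1)[symmetric] by simp
  have i1: "subgroup_generated (AutoGroup (RAAG V E)) {lateral_transvection V E s a | s a. s \<in> S \<and> a \<in> \<Delta>}
      \<cong> free_Abelian_group (S \<times> \<Delta>)"
    unfolding X using R.main_iso sl(1) D by simp
  have "S \<times> \<Delta> \<approx> {..< card S * card \<Delta>}"
    using eqpoll_iff_card[of "S \<times> \<Delta>" "{..< card S * card \<Delta>}"] finS finD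
    by (simp add: card_cartesian_product)
  then have i2: "free_Abelian_group (S \<times> \<Delta>) \<cong> free_Abelian_group {..< card S * card \<Delta>}"
    by (simp add: isomorphic_free_Abelian_groups)
  show ?thesis by (rule iso_trans[OF i1 i2])
qed

end
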